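(* Let $p\ge q\ge1$. Let $Q_1:\mathbb{R}\to\mathbb{R}^{d_1}$ and $Q_2:\mathbb{R}^2\to\mathbb{R}^{d_2}$ be measurable. For measurable $U\subset\mathbb{R}^2$ and $I\subset\mathbb{R}$ define $E^{(2)}_Uh(x_1,x_2,x_3,x_4)=\int_U h(r,s)e(x_1r+x_2s+x_3\cdot Q_1(r)+x_4\cdot Q_2(r,s))\,dr\,ds$ for $(x_1,x_2,x_3,x_4)\in\mathbb{R}\times\mathbb{R}\times\mathbb{R}^{d_1}\times\mathbb{R}^{d_2}$, and $E^{(3)}_Ih(x_1,x_3)=\int_I h(r)e(x_1r+x_3\cdot Q_1(r))\,dr$, where $e(z)=e^{2\pi iz}$. Fix a measurable partition $I_1,\dots,I_l$ of $[0,1]$ and a measurable set $B\subset\mathbb{R}^{1+d_1}$. Suppose $C$ is a number such that $\|E^{(3)}_{[0,1]}h\|_{L^p(B)}\le C\big(\sum_i\|E^{(3)}_{I_i}h\|_{L^p(B)}^q\big)^{1/q}$ for all measurable $h:[0,1]\to\mathbb{C}$. Then for every measurable $B'\subset\mathbb{R}^{1+d_2}$ and every measurable $h:[0,1]^2\to\mathbb{C}$, $\|E^{(2)}_{[0,1]^2}h\|_{L^p(B\times B')}\le C\big(\sum_i\|E^{(2)}_{I_i\times[0,1]}h\|_{L^p(B\times B')}^q\big)^{1/q}$, where $B\times B'$ denotes $\{(x_1,x_2,x_3,x_4):(x_1,x_3)\in B,\ (x_2,x_4)\in B'\}\subset\mathbb{R}^{2+d_1+d_2}$. *)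

theory Defs
  imports "HOL-Analysis.Analysis"
begin

definition ee :: "real \<Rightarrow> complex" where
  "ee z = exp (2 * pi * \<i> * complex_of_real z)"

text \<open>Real powers of extended nonnegative reals (infinity stays infinity), for a > 0.\<close>
definition epowr :: "ennreal \<Rightarrow> real \<Rightarrow> ennreal" where
  "epowr x a = (if x = \<infinity> then \<infinity> else ennreal (enn2real x powr a))"

definition Lpnorm :: "real \<Rightarrow> 'a::euclidean_space set \<Rightarrow> ('a \<Rightarrow> complex) \<Rightarrow> ennreal" where
  "Lpnorm p B F = epowr (\<integral>\<^sup>+ x. indicator B x * ennreal (cmod (F x) powr p) \<partial>lborel) (1 / p)"

definition E3 :: "(real \<Rightarrow> real ^ 'd1) \<Rightarrow> real set \<Rightarrow> (real \<Rightarrow> complex)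
    \<Rightarrow> (real \<times> (real ^ 'd1)) \<Rightarrow> complex" where
  "E3 Q1 I h = (\<lambda>(x1, x3). set_lebesgue_integral lborel I
      (\<lambda>r. h r * ee (x1 * r + x3 \<bullet> Q1 r)))"

definition E2 :: "(real \<Rightarrow> real ^ 'd1) \<Rightarrow> (real \<times> real \<Rightarrow> real ^ 'd2) \<Rightarrow> (real \<times> real) set
    \<Rightarrow> (real \<times> real \<Rightarrow> complex) \<Rightarrow> real \<times> real \<times> (real ^ 'd1) \<times> (real ^ 'd2) \<Rightarrow> complex" where
  "E2 Q1 Q2 U h = (\<lambda>(x1, x2, x3, x4). set_lebesgue_integral lborel U
      (\<lambda>(r, s). h (r, s) * ee (x1 * r + x2 * s + x3 \<bullet> Q1 r + x4 \<bullet> Q2 (r, s))))"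

definition boxprod :: "(real \<times> (real ^ 'd1)) set \<Rightarrow> (real \<times> (real ^ 'd2)) set
    \<Rightarrow> (real \<times> real \<times> (real ^ 'd1) \<times> (real ^ 'd2)) set" where
  "boxprod B B' = {(x1, x2, x3, x4). (x1, x3) \<in> B \<and> (x2, x4) \<in> B'}"

end

theory Submission
  imports Defs
begin


lemma conv_pow:
  fixes s t lam r :: real
  assumes "r \<ge> 1" "s > 0" "t > 0" "0 \<le> lam" "lam \<le> 1"
  shows "(lam * s + (1 - lam) * t) powr r \<le> lam * s powr r + (1 - lam) * t powr r"
  using convex_onD[OF powr_convex[OF assms(1)], of lam t s] assms by (simp add: add.commute)

lemma aux_ge1:
  fixes A B r :: real assumes "A > 0" "B > 0" "r \<ge> 1"
  shows "(A + B) powr (r - 1) * B powr (1 - r) \<ge> 1"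
proof -
  have b: "B powr (1 - r) = 1 / B powr (r - 1)" by (metis minus_diff_eq powr_minus_divide)
  have "(A + B) powr (r - 1) * B powr (1 - r) = ((A+B)/B) powr (r - 1)"
    using assms by (simp add: b powr_divide)
  also have "\<dots> \<ge> 1" using assms by (intro ge_one_powr_ge_zero) auto
  finally show ?thesis .
qed

lemma pt_ineq:
  fixes u v A B r :: real
  assumes "u \<ge> 0" "v \<ge> 0" "A > 0" "B > 0" "r \<ge> 1"
  shows "(u + v) powr r \<le> (A + B) powr (r - 1) * (A powr (1 - r) * u powr r + B powr (1 - r) * v powr r)"
proof (cases "u = 0 \<or> v = 0")
  case True
  then show ?thesis
  proof
    assume "u = 0"
    have "1 * v powr r \<le> ((A + B) powr (r - 1) * B powr (1 - r)) * v powr r"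
      using aux_ge1[OF assms(3,4,5)] by (intro mult_right_mono) auto
    then show ?thesis using \<open>u = 0\<close> by (simp add: algebra_simps)
  next
    assume "v = 0"
    have "1 * u powr r \<le> ((B + A) powr (r - 1) * A powr (1 - r)) * u powr r"
      using aux_ge1[OF assms(4,3,5)] by (intro mult_right_mono) auto
    then show ?thesis using \<open>v = 0\<close> by (simp add: algebra_simps)
  qed
next
  case False
  then have uv: "u > 0" "v > 0" using assms by auto
  define lam where "lam = A / (A + B)"
  have lam: "0 \<le> lam" "lam \<le> 1" "1 - lam = B / (A + B)" using assms by (auto simp: lam_def field_simps)
  have eq: "u + v = (A + B) * (lam * (u / A) + (1 - lam) * (v / B))"
  proof -
    have "lam * (u / A) = u / (A + B)" "(1 - lam) * (v / B) = v / (A + B)"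
      using assms by (simp_all add: lam(3)) (simp add: lam_def)
    then show ?thesis using assms by (simp add: add_divide_distrib[symmetric])
  qed
  have "(u + v) powr r = (A + B) powr r * (lam * (u / A) + (1 - lam) * (v / B)) powr r"
    using assms uv lam by (subst eq, subst powr_mult) (auto intro!: add_nonneg_nonneg mult_nonneg_nonneg)
  also have "\<dots> \<le> (A + B) powr r * (lam * (u / A) powr r + (1 - lam) * (v / B) powr r)"
    using conv_pow[OF assms(5), of "u/A" "v/B" lam] assms uv lam by (intro mult_left_mono) auto
  also have "\<dots> = (A + B) powr (r - 1) * (A powr (1 - r) * u powr r + B powr (1 - r) * v powr r)"
  proof -
    have h1: "(A + B) powr (r - 1) = (A + B) powr r / (A + B)"
      using assms by (simp add: powr_diff)
    have h2: "A powr (1 - r) = A / A powr r" "B powr (1 - r) = B / B powr r"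
      using assms by (simp_all add: powr_diff)
    have h3: "(u / A) powr r = u powr r / A powr r" "(v / B) powr r = v powr r / B powr r"
      using assms uv by (simp_all add: powr_divide)
    have "(A + B) powr r * lam * (u / A) powr r = (A + B) powr (r - 1) * (A powr (1 - r) * u powr r)"
      using assms unfolding h1 h2 h3 lam_def by (simp add: field_simps)
    moreover have "(A + B) powr r * (1 - lam) * (v / B) powr r = (A + B) powr (r - 1) * (B powr (1 - r) * v powr r)"
      using assms unfolding h1 h2 h3 lam(3) by (simp add: field_simps)
    ultimately show ?thesis by (simp add: algebra_simps)
  qed
  finally show ?thesis .
qed



lemma epowr_ennreal[simp]: "0 \<le> x \<Longrightarrow> epowr (ennreal x) a = ennreal (x powr a)"
  by (simp add: epowr_def)

lemma epowr_top[simp]: "epowr top a = top"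
  by (simp add: epowr_def)

lemma epowr_0[simp]: "epowr 0 a = 0"
  by (simp add: epowr_def)

lemma epowr_cases: obtains (fin) t where "x = ennreal t" "0 \<le> t" | (top) "x = top"
  by (cases x) auto

lemma epowr_epowr: "epowr (epowr x a) b = epowr x (a * b)"
  by (cases x rule: epowr_cases) (auto simp: powr_powr)

lemma epowr_1[simp]: "epowr x 1 = x"
  by (cases x rule: epowr_cases) auto

lemma epowr_eq_0_iff: "epowr x a = 0 \<longleftrightarrow> x = 0"
  by (cases x rule: epowr_cases) auto

lemma epowr_mono: assumes "a > 0" "x \<le> y" shows "epowr x a \<le> epowr y a"
proof (cases y rule: epowr_cases)
  case (fin t)
  show ?thesis
  proof (cases x rule: epowr_cases)
    case (fin s)
    then have "s \<le> t" using \<open>y = ennreal t\<close> \<open>0 \<le> t\<close> assms(2) by (simp add: ennreal_le_iff)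
    then show ?thesis using fin \<open>y = ennreal t\<close> \<open>0 \<le> t\<close> assms(1) by (simp add: powr_mono2)
  next
    case top
    then show ?thesis using fin assms(2) by (simp add: top_unique)
  qed
qed simp


lemma epowr_mult: assumes "a > 0" shows "epowr (x * y) a = epowr x a * epowr y a"
proof -
  { fix s t :: real assume "0 \<le> s" "0 \<le> t"
    then have "epowr (ennreal s * ennreal t) a = epowr (ennreal s) a * epowr (ennreal t) a"
    proof -
      have "ennreal s * ennreal t = ennreal (s * t)" using \<open>0 \<le> s\<close> \<open>0 \<le> t\<close> by (rule ennreal_mult[symmetric])
      moreover have "ennreal ((s * t) powr a) = ennreal (s powr a) * ennreal (t powr a)"
        using \<open>0 \<le> s\<close> \<open>0 \<le> t\<close> by (simp add: powr_mult ennreal_mult)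
      ultimately show ?thesis using \<open>0 \<le> s\<close> \<open>0 \<le> t\<close> by simp
    qed }
  moreover
  { fix s :: real assume "0 \<le> s"
    then have "epowr (ennreal s * top) a = epowr (ennreal s) a * epowr top a"
         "epowr (top * ennreal s) a = epowr top a * epowr (ennreal s) a"
      using assms by (cases "s = 0"; simp add: ennreal_mult_top ennreal_top_mult)+ }
  ultimately show ?thesis
    by (cases x rule: epowr_cases; cases y rule: epowr_cases) auto
qed


lemma measurable_epowr[measurable]:
  assumes [measurable]: "f \<in> borel_measurable M"
  shows "(\<lambda>x. epowr (f x) a) \<in> borel_measurable M"
  unfolding epowr_def by measurable


lemma pt_enn:
  fixes A B r :: real and x y :: ennreal
  assumes "A > 0" "B > 0" "r \<ge> 1"
  shows "epowr (x + y) r \<le> ennreal ((A + B) powr (r - 1)) *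
     (ennreal (A powr (1 - r)) * epowr x r + ennreal (B powr (1 - r)) * epowr y r)"
proof (cases "x = top \<or> y = top")
  case True
  have pos: "ennreal ((A + B) powr (r - 1)) \<noteq> 0" "ennreal (A powr (1 - r)) \<noteq> 0"
    "ennreal (B powr (1 - r)) \<noteq> 0" using assms by auto
  from True show ?thesis using pos by (auto simp: ennreal_mult_top)
next
  case False
  then obtain u v where uv: "x = ennreal u" "0 \<le> u" "y = ennreal v" "0 \<le> v"
    by (metis ennreal_cases)
  have "(u + v) powr r \<le> (A + B) powr (r - 1) * (A powr (1 - r) * u powr r + B powr (1 - r) * v powr r)"
    by (rule pt_ineq) (use uv assms in auto)
  then have "ennreal ((u + v) powr r) \<le> ennreal ((A + B) powr (r - 1) * (A powr (1 - r) * u powr r + B powr (1 - r) * v powr r))"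
    by (rule ennreal_leI)
  also have "\<dots> = ennreal ((A + B) powr (r - 1)) *
     (ennreal (A powr (1 - r)) * ennreal (u powr r) + ennreal (B powr (1 - r)) * ennreal (v powr r))"
  proof -
    have X: "0 \<le> A powr (1-r) * u powr r" "0 \<le> B powr (1-r) * v powr r" by simp_all
    show ?thesis by (simp add: ennreal_plus[OF X] ennreal_mult)
  qed
  finally show ?thesis using uv by (simp flip: ennreal_plus)
qed

lemma mink2:
  assumes r: "r \<ge> 1" and f[measurable]: "f \<in> borel_measurable M" and g[measurable]: "g \<in> borel_measurable M"
  shows "epowr (\<integral>\<^sup>+x. epowr (f x + g x) r \<partial>M) (1/r)
     \<le> epowr (\<integral>\<^sup>+x. epowr (f x) r \<partial>M) (1/r) + epowr (\<integral>\<^sup>+x. epowr (g x) r \<partial>M) (1/r)"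
proof -
  define Af where "Af = (\<integral>\<^sup>+x. epowr (f x) r \<partial>M)"
  define Bg where "Bg = (\<integral>\<^sup>+x. epowr (g x) r \<partial>M)"
  have r0: "r > 0" "1/r > 0" using r by auto
  show ?thesis
  proof (cases "Af = top \<or> Bg = top")
    case True
    then show ?thesis unfolding Af_def[symmetric] Bg_def[symmetric] by auto
  next
    case False
    show ?thesis
    proof (cases "Af = 0 \<or> Bg = 0")
      case True
      then show ?thesis
      proof
        assume "Af = 0"
        then have "AE x in M. epowr (f x) r = 0" unfolding Af_def
          by (subst nn_integral_0_iff_AE[symmetric]) auto
        then have "AE x in M. f x = 0" by (simp add: epowr_eq_0_iff)
        then have "(\<integral>\<^sup>+x. epowr (f x + g x) r \<partial>M) = Bg" unfolding Bg_def
          by (intro nn_integral_cong_AE) auto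
        then show ?thesis unfolding Af_def[symmetric] Bg_def[symmetric] using \<open>Af = 0\<close> by simp
      next
        assume "Bg = 0"
        then have "AE x in M. epowr (g x) r = 0" unfolding Bg_def
          by (subst nn_integral_0_iff_AE[symmetric]) auto
        then have "AE x in M. g x = 0" by (simp add: epowr_eq_0_iff)
        then have "(\<integral>\<^sup>+x. epowr (f x + g x) r \<partial>M) = Af" unfolding Af_def
          by (intro nn_integral_cong_AE) auto
        then show ?thesis unfolding Af_def[symmetric] Bg_def[symmetric] using \<open>Bg = 0\<close> by simp
      qed
    next
      case False2: False
      obtain a where a: "Af = ennreal a" "a > 0" using False False2
        by (metis ennreal_cases ennreal_eq_0_iff not_le top_neq_ennreal)
      obtain b where b: "Bg = ennreal b" "b > 0" using False False2
        by (metis ennreal_cases ennreal_eq_0_iff not_le top_neq_ennreal)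
      define A where "A = a powr (1/r)"
      define B where "B = b powr (1/r)"
      have AB: "A > 0" "B > 0" using a b by (auto simp: A_def B_def)
      have aA: "a = A powr r" "b = B powr r" using a b r0 by (simp_all add: A_def B_def powr_powr)
      have "(\<integral>\<^sup>+x. epowr (f x + g x) r \<partial>M) \<le> (\<integral>\<^sup>+x. ennreal ((A + B) powr (r - 1)) *
         (ennreal (A powr (1 - r)) * epowr (f x) r + ennreal (B powr (1 - r)) * epowr (g x) r) \<partial>M)"
        by (intro nn_integral_mono pt_enn AB r)
      also have "\<dots> = ennreal ((A + B) powr (r - 1)) * (ennreal (A powr (1 - r)) * Af + ennreal (B powr (1 - r)) * Bg)"
        unfolding Af_def Bg_def
        by (simp add: nn_integral_cmult nn_integral_add)
      also have "\<dots> = ennreal ((A + B) powr r)"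
      proof -
        have "A powr (1 - r) * a = A" "B powr (1 - r) * b = B"
          using AB by (simp_all add: aA flip: powr_add)
        moreover have "(A + B) powr (r - 1) * (A + B) = (A + B) powr r"
          using AB by (simp add: powr_diff)
        ultimately show ?thesis using a b AB
          by (simp add: ennreal_mult[symmetric] ennreal_plus[symmetric] del: ennreal_plus)
      qed
      finally have "epowr (\<integral>\<^sup>+x. epowr (f x + g x) r \<partial>M) (1/r) \<le> epowr (ennreal ((A + B) powr r)) (1/r)"
        by (rule epowr_mono[OF r0(2)])
      also have "\<dots> = ennreal A + ennreal B" using AB r0 by (simp add: powr_powr)
      also have "\<dots> = epowr Af (1/r) + epowr Bg (1/r)" using a b by (simp add: A_def B_def)
      finally show ?thesis unfolding Af_def Bg_def .
    qed
  qed
qed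



lemma mink_sum:
  assumes r: "r \<ge> 1" and S: "finite S" and f: "\<And>i. i \<in> S \<Longrightarrow> f i \<in> borel_measurable M"
  shows "epowr (\<integral>\<^sup>+x. epowr (\<Sum>i\<in>S. f i x) r \<partial>M) (1/r)
     \<le> (\<Sum>i\<in>S. epowr (\<integral>\<^sup>+x. epowr (f i x) r \<partial>M) (1/r))"
  using S f
proof (induction S rule: finite_induct)
  case empty
  then show ?case by simp
next
  case (insert j S)
  have m: "(\<lambda>x. \<Sum>i\<in>S. f i x) \<in> borel_measurable M"
    using insert.prems by (intro borel_measurable_sum) auto
  have "epowr (\<integral>\<^sup>+x. epowr (\<Sum>i\<in>insert j S. f i x) r \<partial>M) (1/r)
      = epowr (\<integral>\<^sup>+x. epowr (f j x + (\<Sum>i\<in>S. f i x)) r \<partial>M) (1/r)"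
    using insert.hyps by simp
  also have "\<dots> \<le> epowr (\<integral>\<^sup>+x. epowr (f j x) r \<partial>M) (1/r) + epowr (\<integral>\<^sup>+x. epowr (\<Sum>i\<in>S. f i x) r \<partial>M) (1/r)"
    using insert.prems by (intro mink2 r m) auto
  also have "\<dots> \<le> epowr (\<integral>\<^sup>+x. epowr (f j x) r \<partial>M) (1/r) + (\<Sum>i\<in>S. epowr (\<integral>\<^sup>+x. epowr (f i x) r \<partial>M) (1/r))"
    using insert.IH insert.prems by (intro add_left_mono) auto
  finally show ?case using insert.hyps by simp
qed



lemma nnfst:
  fixes F :: "'a::euclidean_space \<times> 'b::euclidean_space \<Rightarrow> ennreal"
  assumes "F \<in> borel_measurable borel"
  shows "(\<integral>\<^sup>+x. F x \<partial>lborel) = (\<integral>\<^sup>+x1. \<integral>\<^sup>+x2. F (x1, x2) \<partial>lborel \<partial>lborel)"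
proof -
  have "F \<in> borel_measurable (lborel \<Otimes>\<^sub>M lborel)"
    using assms by (simp add: lborel_prod)
  from lborel.nn_integral_fst[OF this] show ?thesis by (simp add: lborel_prod)
qed

lemma rearr:
  fixes F :: "real \<times> real \<times> 'a::euclidean_space \<times> 'b::euclidean_space \<Rightarrow> ennreal"
  assumes Fm[measurable]: "F \<in> borel_measurable borel"
  shows "(\<integral>\<^sup>+x. F x \<partial>lborel) = (\<integral>\<^sup>+y. \<integral>\<^sup>+z. F (fst z, fst y, snd z, snd y) \<partial>lborel \<partial>lborel)"
proof -
  have "(\<integral>\<^sup>+x. F x \<partial>lborel) = (\<integral>\<^sup>+x1. \<integral>\<^sup>+x2. \<integral>\<^sup>+x3. \<integral>\<^sup>+x4. F (x1,x2,x3,x4) \<partial>lborel \<partial>lborel \<partial>lborel \<partial>lborel)"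
    apply (subst nnfst, simp)
    apply (subst nnfst, simp)
    apply (subst nnfst, simp)
    apply (rule refl)
    done
  also have "\<dots> = (\<integral>\<^sup>+x2. \<integral>\<^sup>+x1. \<integral>\<^sup>+x3. \<integral>\<^sup>+x4. F (x1,x2,x3,x4) \<partial>lborel \<partial>lborel \<partial>lborel \<partial>lborel)"
    by (rule lborel_pair.Fubini'[symmetric]) simp
  also have "\<dots> = (\<integral>\<^sup>+x2. \<integral>\<^sup>+x1. \<integral>\<^sup>+x4. \<integral>\<^sup>+x3. F (x1,x2,x3,x4) \<partial>lborel \<partial>lborel \<partial>lborel \<partial>lborel)"
    by (intro nn_integral_cong lborel_pair.Fubini'[symmetric]) simp
  also have "\<dots> = (\<integral>\<^sup>+x2. \<integral>\<^sup>+x4. \<integral>\<^sup>+x1. \<integral>\<^sup>+x3. F (x1,x2,x3,x4) \<partial>lborel \<partial>lborel \<partial>lborel \<partial>lborel)"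
    by (intro nn_integral_cong lborel_pair.Fubini'[symmetric]) simp
  also have "\<dots> = (\<integral>\<^sup>+y. \<integral>\<^sup>+z. F (fst z, fst y, snd z, snd y) \<partial>lborel \<partial>lborel)"
  proof -
    have "(\<integral>\<^sup>+y. \<integral>\<^sup>+z. F (fst z, fst y, snd z, snd y) \<partial>lborel \<partial>lborel)
      = (\<integral>\<^sup>+x2. \<integral>\<^sup>+x4. \<integral>\<^sup>+z. F (fst z, x2, snd z, x4) \<partial>lborel \<partial>lborel \<partial>lborel)"
    proof -
      have "(\<lambda>y::real\<times>'b. \<integral>\<^sup>+(z::real\<times>'a). F (fst z, fst y, snd z, snd y) \<partial>lborel) \<in> borel_measurable lborel"
      proof -
        have "(\<lambda>w::(real\<times>'b)\<times>(real\<times>'a). F (fst (snd w), fst (fst w), snd (snd w), snd (fst w))) \<in> borel_measurable borel"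
          by (rule measurable_compose[OF _ Fm], rule borel_measurable_continuous_onI)
             (auto intro!: continuous_intros)
        then have "(\<lambda>(y::real\<times>'b,z::real\<times>'a). F (fst z, fst y, snd z, snd y)) \<in> borel_measurable borel"
          by (simp add: case_prod_beta')
        then have "(\<lambda>(y::real\<times>'b,z::real\<times>'a). F (fst z, fst y, snd z, snd y)) \<in> borel_measurable (lborel \<Otimes>\<^sub>M lborel)"
          by (simp add: lborel_prod)
        then show ?thesis by (rule lborel.borel_measurable_nn_integral)
      qed
      then show ?thesis using nnfst[of "\<lambda>y. \<integral>\<^sup>+z. F (fst z, fst y, snd z, snd y) \<partial>lborel"] by simp
    qed
    also have "\<dots> = (\<integral>\<^sup>+x2. \<integral>\<^sup>+x4. \<integral>\<^sup>+x1. \<integral>\<^sup>+x3. F (x1, x2, x3, x4) \<partial>lborel \<partial>lborel \<partial>lborel \<partial>lborel)"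
      apply (intro nn_integral_cong)
      subgoal for x2 x4
      proof -
        have "(\<lambda>z::real\<times>'a. F (fst z, x2, snd z, x4)) \<in> borel_measurable borel"
          by (rule measurable_compose[OF _ Fm], rule borel_measurable_continuous_onI)
             (auto intro!: continuous_intros)
        then show ?thesis using nnfst[of "\<lambda>z. F (fst z, x2, snd z, x4)"] by simp
      qed
      done
    finally show ?thesis by simp
  qed
  finally show ?thesis .
qed



lemma ee_cont: "continuous_on UNIV ee"
  unfolding ee_def by (intro continuous_intros)

lemma ee_meas[measurable]: "ee \<in> borel_measurable borel"
  by (rule borel_measurable_continuous_onI[OF ee_cont])

lemma norm_ee[simp]: "norm (ee z) = 1"
  by (simp add: ee_def norm_exp_eq_Re)

lemma ee_add: "ee (a + b) = ee a * ee b"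
  by (simp add: ee_def distrib_left exp_add)

definition gg :: "(real \<times> real \<Rightarrow> real ^ 'd2) \<Rightarrow> (real \<times> real \<Rightarrow> complex) \<Rightarrow> real \<times> (real ^ 'd2) \<Rightarrow> real \<Rightarrow> complex" where
  "gg Q2 h y r = (\<integral>s. indicator {0..1} s *\<^sub>R (h (r, s) * ee (fst y * s + snd y \<bullet> Q2 (r, s))) \<partial>lborel)"

lemma fubini_E2:
  fixes Q1 :: "real \<Rightarrow> real ^ 'd1" and Q2 :: "real \<times> real \<Rightarrow> real ^ 'd2" and h :: "real \<times> real \<Rightarrow> complex"
  assumes hm[measurable]: "h \<in> borel_measurable borel"
    and Q1m[measurable]: "Q1 \<in> borel_measurable borel"
    and Q2m[measurable]: "Q2 \<in> borel_measurable borel"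
    and Jm[measurable]: "J \<in> sets borel" and Jsub: "J \<subseteq> {0..1}"
    and int: "set_integrable lborel ({0..1} \<times> {0..1}) h"
  shows "E2 Q1 Q2 (J \<times> {0..1}) h (x1, x2, x3, x4) = E3 Q1 J (gg Q2 h (x2, x4)) (x1, x3)"
proof -
  define Fw where "Fw = (\<lambda>w::real\<times>real. (indicator J (fst w) * indicator {0..1} (snd w)) *\<^sub>R
      (h w * ee (x1 * fst w + x2 * snd w + x3 \<bullet> Q1 (fst w) + x4 \<bullet> Q2 w)))"
  have [measurable]: "h \<in> borel_measurable (borel \<Otimes>\<^sub>M borel)" "Q2 \<in> borel_measurable (borel \<Otimes>\<^sub>M borel)"
    by (simp_all add: borel_prod)
  have "Fw \<in> borel_measurable (borel \<Otimes>\<^sub>M borel)" unfolding Fw_def by measurable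
  then have Fm: "Fw \<in> borel_measurable borel" by (simp add: borel_prod)
  have "integrable lborel Fw"
  proof (rule Bochner_Integration.integrable_bound)
    show "integrable lborel (\<lambda>w. indicator ({0..1} \<times> {0..1}) w *\<^sub>R h w)"
      using int by (simp add: set_integrable_def)
    show "Fw \<in> borel_measurable lborel" using Fm by simp
    show "AE w in lborel. norm (Fw w) \<le> norm (indicator ({0..1} \<times> {0..1}) w *\<^sub>R h w)"
    proof (intro AE_I2)
      fix w :: "real \<times> real"
      show "norm (Fw w) \<le> norm (indicator ({0..1} \<times> {0..1}) w *\<^sub>R h w)"
        using Jsub by (cases w) (auto simp: Fw_def indicator_def norm_mult)
    qed
  qed
  then have intP: "integrable (lborel \<Otimes>\<^sub>M lborel) Fw" by (simp add: lborel_prod)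
  have "E2 Q1 Q2 (J \<times> {0..1}) h (x1, x2, x3, x4) = integral\<^sup>L lborel Fw"
    unfolding E2_def set_lebesgue_integral_def Fw_def
    by (simp add: indicator_times case_prod_beta)
  also have "\<dots> = integral\<^sup>L (lborel \<Otimes>\<^sub>M lborel) Fw" by (simp add: lborel_prod)
  also have "\<dots> = (\<integral>r. \<integral>s. Fw (r, s) \<partial>lborel \<partial>lborel)"
    by (rule lborel_pair.integral_fst'[OF intP, symmetric])
  also have "\<dots> = (\<integral>r. indicator J r *\<^sub>R (gg Q2 h (x2, x4) r * ee (x1 * r + x3 \<bullet> Q1 r)) \<partial>lborel)"
  proof (intro Bochner_Integration.integral_cong refl)
    fix r
    have "(\<integral>s. Fw (r, s) \<partial>lborel) = (\<integral>s. (indicator J r * ee (x1 * r + x3 \<bullet> Q1 r)) *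
        (indicator {0..1} s *\<^sub>R (h (r, s) * ee (x2 * s + x4 \<bullet> Q2 (r, s)))) \<partial>lborel)"
    proof (intro Bochner_Integration.integral_cong refl)
      fix s
      have "x1 * r + x2 * s + x3 \<bullet> Q1 r + x4 \<bullet> Q2 (r, s) = (x1 * r + x3 \<bullet> Q1 r) + (x2 * s + x4 \<bullet> Q2 (r, s))"
        by simp
      then show "Fw (r, s) = (indicator J r * ee (x1 * r + x3 \<bullet> Q1 r)) *
        (indicator {0..1} s *\<^sub>R (h (r, s) * ee (x2 * s + x4 \<bullet> Q2 (r, s))))"
        unfolding Fw_def by (simp add: ee_add scaleR_conv_of_real split: split_indicator)
    qed
    also have "\<dots> = indicator J r *\<^sub>R (gg Q2 h (x2, x4) r * ee (x1 * r + x3 \<bullet> Q1 r))"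
      by (simp add: gg_def scaleR_conv_of_real split: split_indicator)
    finally show "(\<integral>s. Fw (r, s) \<partial>lborel) = indicator J r *\<^sub>R (gg Q2 h (x2, x4) r * ee (x1 * r + x3 \<bullet> Q1 r))" .
  qed
  also have "\<dots> = E3 Q1 J (gg Q2 h (x2, x4)) (x1, x3)"
    unfolding E3_def set_lebesgue_integral_def by simp
  finally show ?thesis .
qed



lemma E2_meas:
  fixes Q1 :: "real \<Rightarrow> real ^ 'd1" and Q2 :: "real \<times> real \<Rightarrow> real ^ 'd2" and h :: "real \<times> real \<Rightarrow> complex"
  assumes hm: "h \<in> borel_measurable borel"
    and Q1m[measurable]: "Q1 \<in> borel_measurable borel"
    and Q2m: "Q2 \<in> borel_measurable borel"
    and Jm[measurable]: "J \<in> sets borel"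
  shows "E2 Q1 Q2 (J \<times> {0..1}) h \<in> borel_measurable borel"
proof -
  define G where "G = (\<lambda>(x::real \<times> real \<times> (real ^ 'd1) \<times> (real ^ 'd2)) (w::real\<times>real).
     (indicator J (fst w) * indicator {0..1} (snd w)) *\<^sub>R (h w * ee (fst x * fst w + fst (snd x) * snd w
        + fst (snd (snd x)) \<bullet> Q1 (fst w) + snd (snd (snd x)) \<bullet> Q2 w)))"
  have [measurable]: "h \<in> borel_measurable (borel \<Otimes>\<^sub>M borel)" "Q2 \<in> borel_measurable (borel \<Otimes>\<^sub>M borel)"
    using hm Q2m by (simp_all add: borel_prod)
  have "case_prod G \<in> borel_measurable ((borel \<Otimes>\<^sub>M (borel \<Otimes>\<^sub>M (borel \<Otimes>\<^sub>M borel))) \<Otimes>\<^sub>M (borel \<Otimes>\<^sub>M borel))"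
    unfolding G_def by measurable
  then have "case_prod G \<in> borel_measurable (borel \<Otimes>\<^sub>M lborel)"
    by (simp add: borel_prod measurable_cong_sets[OF sets_pair_measure_cong[OF refl sets_lborel] refl])
  then have "(\<lambda>x. \<integral>w. G x w \<partial>lborel) \<in> borel_measurable borel"
    by (rule lborel.borel_measurable_lebesgue_integral)
  moreover have "E2 Q1 Q2 (J \<times> {0..1}) h = (\<lambda>x. \<integral>w. G x w \<partial>lborel)"
    by (auto simp: E2_def set_lebesgue_integral_def G_def indicator_times case_prod_beta fun_eq_iff)
  ultimately show ?thesis by simp
qed

lemma gg_meas:
  fixes Q2 :: "real \<times> real \<Rightarrow> real ^ 'd2" and h :: "real \<times> real \<Rightarrow> complex"
  assumes hm: "h \<in> borel_measurable borel"
    and Q2m: "Q2 \<in> borel_measurable borel"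
  shows "gg Q2 h y \<in> borel_measurable borel"
proof -
  have [measurable]: "h \<in> borel_measurable (borel \<Otimes>\<^sub>M borel)" "Q2 \<in> borel_measurable (borel \<Otimes>\<^sub>M borel)"
    using hm Q2m by (simp_all add: borel_prod)
  have "(\<lambda>(r::real, s::real). indicator {0..1} s *\<^sub>R (h (r, s) * ee (fst y * s + snd y \<bullet> Q2 (r, s))))
      \<in> borel_measurable (borel \<Otimes>\<^sub>M borel)"
    by measurable
  then have "(\<lambda>(r::real, s::real). indicator {0..1} s *\<^sub>R (h (r, s) * ee (fst y * s + snd y \<bullet> Q2 (r, s))))
      \<in> borel_measurable (borel \<Otimes>\<^sub>M lborel)"
    by (simp add: measurable_cong_sets[OF sets_pair_measure_cong[OF refl sets_lborel] refl])
  then show ?thesis unfolding gg_def[abs_def]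
    by (rule lborel.borel_measurable_lebesgue_integral)
qed



definition Psi :: "real \<Rightarrow> (real \<times> (real ^ 'd1)) set \<Rightarrow> (real \<Rightarrow> real ^ 'd1) \<Rightarrow> (real \<times> real \<Rightarrow> real ^ 'd2)
   \<Rightarrow> (real \<times> real \<Rightarrow> complex) \<Rightarrow> real set \<Rightarrow> real \<times> (real ^ 'd2) \<Rightarrow> ennreal" where
  "Psi p B Q1 Q2 h J y = (\<integral>\<^sup>+z. indicator B z * ennreal (cmod (E2 Q1 Q2 (J \<times> {0..1}) h (fst z, fst y, snd z, snd y)) powr p) \<partial>lborel)"

lemma Psi_meas:
  fixes Q1 :: "real \<Rightarrow> real ^ 'd1" and Q2 :: "real \<times> real \<Rightarrow> real ^ 'd2" and h :: "real \<times> real \<Rightarrow> complex"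
  assumes hm: "h \<in> borel_measurable borel"
    and Q1m: "Q1 \<in> borel_measurable borel"
    and Q2m: "Q2 \<in> borel_measurable borel"
    and Jm: "J \<in> sets borel" and Bm[measurable]: "B \<in> sets borel"
  shows "Psi p B Q1 Q2 h J \<in> borel_measurable borel"
proof -
  have E: "(\<lambda>w::(real \<times> (real ^ 'd2)) \<times> (real \<times> (real ^ 'd1)). E2 Q1 Q2 (J \<times> {0..1}) h (fst (snd w), fst (fst w), snd (snd w), snd (fst w)))
      \<in> borel_measurable borel"
    by (rule measurable_compose[OF _ E2_meas[OF hm Q1m Q2m Jm]], rule borel_measurable_continuous_onI)
       (auto intro!: continuous_intros)
  then have [measurable]: "(\<lambda>w::(real \<times> (real ^ 'd2)) \<times> (real \<times> (real ^ 'd1)). E2 Q1 Q2 (J \<times> {0..1}) h (fst (snd w), fst (fst w), snd (snd w), snd (fst w)))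
      \<in> borel_measurable (borel \<Otimes>\<^sub>M borel)"
    by (simp add: borel_prod)
  have "(\<lambda>w::(real \<times> (real ^ 'd2)) \<times> (real \<times> (real ^ 'd1)). indicator B (snd w) * ennreal (cmod (E2 Q1 Q2 (J \<times> {0..1}) h (fst (snd w), fst (fst w), snd (snd w), snd (fst w))) powr p))
      \<in> borel_measurable (borel \<Otimes>\<^sub>M borel)"
    by measurable
  then have "(\<lambda>(y::real \<times> (real ^ 'd2), z::real \<times> (real ^ 'd1)). indicator B z * ennreal (cmod (E2 Q1 Q2 (J \<times> {0..1}) h (fst z, fst y, snd z, snd y)) powr p))
      \<in> borel_measurable (lborel \<Otimes>\<^sub>M lborel)"
    by (simp add: lborel_prod borel_prod case_prod_beta')
  then have "(\<lambda>y. Psi p B Q1 Q2 h J y) \<in> borel_measurable lborel"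
    unfolding Psi_def by (rule lborel.borel_measurable_nn_integral)
  then show ?thesis by simp
qed

lemma Lp_E3:
  fixes Q1 :: "real \<Rightarrow> real ^ 'd1" and Q2 :: "real \<times> real \<Rightarrow> real ^ 'd2" and h :: "real \<times> real \<Rightarrow> complex"
  assumes hm: "h \<in> borel_measurable borel"
    and Q1m: "Q1 \<in> borel_measurable borel"
    and Q2m: "Q2 \<in> borel_measurable borel"
    and Jm: "J \<in> sets borel" and Jsub: "J \<subseteq> {0..1}"
    and int: "set_integrable lborel ({0..1} \<times> {0..1}) h"
  shows "Lpnorm p B (E3 Q1 J (gg Q2 h y)) = epowr (Psi p B Q1 Q2 h J y) (1/p)"
proof -
  have "\<And>z. E3 Q1 J (gg Q2 h y) z = E2 Q1 Q2 (J \<times> {0..1}) h (fst z, fst y, snd z, snd y)"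
    using fubini_E2[OF hm Q1m Q2m Jm Jsub int] by simp
  then show ?thesis unfolding Lpnorm_def Psi_def by simp
qed

lemma Lp_box:
  fixes Q1 :: "real \<Rightarrow> real ^ 'd1" and Q2 :: "real \<times> real \<Rightarrow> real ^ 'd2" and h :: "real \<times> real \<Rightarrow> complex"
  assumes hm: "h \<in> borel_measurable borel"
    and Q1m: "Q1 \<in> borel_measurable borel"
    and Q2m: "Q2 \<in> borel_measurable borel"
    and Jm: "J \<in> sets borel" and Bm[measurable]: "B \<in> sets borel" and B'm[measurable]: "B' \<in> sets borel"
  shows "Lpnorm p (boxprod B B') (E2 Q1 Q2 (J \<times> {0..1}) h)
     = epowr (\<integral>\<^sup>+y. indicator B' y * Psi p B Q1 Q2 h J y \<partial>lborel) (1/p)"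
proof -
  define F where "F = (\<lambda>x::real \<times> real \<times> (real ^ 'd1) \<times> (real ^ 'd2).
     indicator B (fst x, fst (snd (snd x))) * indicator B' (fst (snd x), snd (snd (snd x))) *
     ennreal (cmod (E2 Q1 Q2 (J \<times> {0..1}) h x) powr p))"
  have [measurable]: "E2 Q1 Q2 (J \<times> {0..1}) h \<in> borel_measurable (borel \<Otimes>\<^sub>M (borel \<Otimes>\<^sub>M (borel \<Otimes>\<^sub>M borel)))"
    using E2_meas[OF hm Q1m Q2m Jm] by (simp add: borel_prod)
  have "F \<in> borel_measurable (borel \<Otimes>\<^sub>M (borel \<Otimes>\<^sub>M (borel \<Otimes>\<^sub>M borel)))"
    unfolding F_def by measurable
  then have Fm: "F \<in> borel_measurable borel" by (simp add: borel_prod)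
  have "(\<integral>\<^sup>+x. indicator (boxprod B B') x * ennreal (cmod (E2 Q1 Q2 (J \<times> {0..1}) h x) powr p) \<partial>lborel)
      = (\<integral>\<^sup>+x. F x \<partial>lborel)"
    by (intro nn_integral_cong) (auto simp: F_def boxprod_def indicator_def)
  also have "\<dots> = (\<integral>\<^sup>+y. \<integral>\<^sup>+z. F (fst z, fst y, snd z, snd y) \<partial>lborel \<partial>lborel)"
    by (rule rearr[OF Fm])
  also have "\<dots> = (\<integral>\<^sup>+y. indicator B' y * Psi p B Q1 Q2 h J y \<partial>lborel)"
  proof (intro nn_integral_cong)
    fix y :: "real \<times> (real ^ 'd2)"
    show "(\<integral>\<^sup>+z. F (fst z, fst y, snd z, snd y) \<partial>lborel) = indicator B' y * Psi p B Q1 Q2 h J y"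
      unfolding Psi_def F_def by (cases "y \<in> B'") simp_all
  qed
  finally show ?thesis unfolding Lpnorm_def by simp
qed



lemma epowr_one[simp]: "epowr 1 a = 1"
  by (simp add: epowr_def)

lemma epowr_ind: "epowr (indicator A x :: ennreal) a = indicator A x"
  by (simp add: indicator_def)

lemma Lpnorm_zero: "Lpnorm p S (\<lambda>x. 0) = 0"
  by (simp add: Lpnorm_def)

lemma main:
  fixes p q C :: real and l :: nat
    and Q1 :: "real \<Rightarrow> real ^ 'd1" and Q2 :: "real \<times> real \<Rightarrow> real ^ 'd2"
    and I :: "nat \<Rightarrow> real set" and B :: "(real \<times> (real ^ 'd1)) set"
    and B' :: "(real \<times> (real ^ 'd2)) set" and h :: "real \<times> real \<Rightarrow> complex"
  assumes pq: "p \<ge> q" "q \<ge> 1"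
    and Q1_meas: "Q1 \<in> borel_measurable borel"
    and Q2_meas: "Q2 \<in> borel_measurable borel"
    and I_meas: "\<And>i. i \<in> {1..l} \<Longrightarrow> I i \<in> sets borel"
    and I_cover: "(\<Union>i\<in>{1..l}. I i) = {0..1}"
    and B_meas: "B \<in> sets borel"
    and hyp: "\<And>h :: real \<Rightarrow> complex. h \<in> borel_measurable borel \<Longrightarrow>
        Lpnorm p B (E3 Q1 {0..1} h)
          \<le> ennreal C * epowr (\<Sum>i\<in>{1..l}. epowr (Lpnorm p B (E3 Q1 (I i) h)) q) (1 / q)"
    and B'm: "B' \<in> sets borel" and hm: "h \<in> borel_measurable borel"
  shows "Lpnorm p (boxprod B B') (E2 Q1 Q2 ({0..1} \<times> {0..1}) h)
        \<le> ennreal C * epowr (\<Sum>i\<in>{1..l}.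
              epowr (Lpnorm p (boxprod B B') (E2 Q1 Q2 (I i \<times> {0..1}) h)) q) (1 / q)"
proof (cases "set_integrable lborel ({0..1} \<times> {0..1}) h")
  case False
  have [measurable]: "h \<in> borel_measurable (borel \<Otimes>\<^sub>M borel)"
    using hm by (simp add: borel_prod)
  have "E2 Q1 Q2 ({0..1} \<times> {0..1}) h x = 0" for x
  proof -
    obtain x1 x2 x3 x4 where x: "x = (x1, x2, x3, x4)" by (cases x) auto
    define G where "G = (\<lambda>w::real\<times>real. indicator ({0..1} \<times> {0..1}) w *\<^sub>R
        (case w of (r, s) \<Rightarrow> h (r, s) * ee (x1 * r + x2 * s + x3 \<bullet> Q1 r + x4 \<bullet> Q2 (r, s))))"
    have "\<not> integrable lborel G"
    proof
      assume "integrable lborel G"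
      moreover have "(\<lambda>w. indicator ({0..1} \<times> {0..1}) w *\<^sub>R h w) \<in> borel_measurable (borel \<Otimes>\<^sub>M borel)"
        by (simp add: indicator_times) measurable
      then have "(\<lambda>w. indicator ({0..1} \<times> {0..1}) w *\<^sub>R h w) \<in> borel_measurable lborel"
        by (simp add: borel_prod)
      ultimately have "integrable lborel (\<lambda>w. indicator ({0..1} \<times> {0..1}) w *\<^sub>R h w)"
        by (rule Bochner_Integration.integrable_bound)
           (auto simp: G_def norm_mult case_prod_beta intro!: AE_I2)
      with False show False by (simp add: set_integrable_def)
    qed
    then show ?thesis
      by (simp add: x E2_def set_lebesgue_integral_def G_def not_integrable_integral_eq)
  qed
  then have "E2 Q1 Q2 ({0..1} \<times> {0..1}) h = (\<lambda>x. 0)" by auto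
  then show ?thesis by (simp add: Lpnorm_zero)
next
  case True
  note int = True
  have p0: "p > 0" and q0: "q > 0" and r1: "p / q \<ge> 1" and r0: "p / q > 0" using pq by auto
  have Isub: "I i \<subseteq> {0..1}" if "i \<in> {1..l}" for i using I_cover that by blast
  define Ps where "Ps J = Psi p B Q1 Q2 h J" for J
  have Psm: "Ps J \<in> borel_measurable borel" if "J \<in> sets borel" for J
    unfolding Ps_def by (rule Psi_meas[OF hm Q1_meas Q2_meas that B_meas])
  have sq: "{0..1::real} \<in> sets borel" by simp
  have pt: "Ps {0..1} y \<le> epowr (ennreal C) p * epowr (\<Sum>i\<in>{1..l}. epowr (Ps (I i) y) (1/p*q)) (1/q*p)" for y
  proof -
    have "epowr (Ps {0..1} y) (1/p) \<le> ennreal C * epowr (\<Sum>i\<in>{1..l}. epowr (epowr (Ps (I i) y) (1/p)) q) (1/q)"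
    proof -
      have "Lpnorm p B (E3 Q1 {0..1} (gg Q2 h y)) = epowr (Ps {0..1} y) (1/p)"
        unfolding Ps_def by (rule Lp_E3[OF hm Q1_meas Q2_meas sq order_refl int])
      moreover have "(\<Sum>i\<in>{1..l}. epowr (Lpnorm p B (E3 Q1 (I i) (gg Q2 h y))) q)
          = (\<Sum>i\<in>{1..l}. epowr (epowr (Ps (I i) y) (1/p)) q)"
        unfolding Ps_def
        by (intro sum.cong refl arg_cong2[where f=epowr] Lp_E3[OF hm Q1_meas Q2_meas I_meas Isub int])
      ultimately show ?thesis using hyp[OF gg_meas[OF hm Q2_meas, of y]] by simp
    qed
    then have "epowr (epowr (Ps {0..1} y) (1/p)) p \<le> epowr (ennreal C * epowr (\<Sum>i\<in>{1..l}. epowr (epowr (Ps (I i) y) (1/p)) q) (1/q)) p"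
      by (rule epowr_mono[OF p0])
    also have "\<dots> = epowr (ennreal C) p * epowr (\<Sum>i\<in>{1..l}. epowr (Ps (I i) y) (1/p*q)) (1/q*p)"
      by (simp add: epowr_mult[OF p0] epowr_epowr)
    finally show ?thesis using p0 by (simp add: epowr_epowr)
  qed
  define fi where "fi i y = indicator B' y * epowr (Ps (I i) y) (1/p*q)" for i y
  have fim: "fi i \<in> borel_measurable lborel" if "i \<in> {1..l}" for i
    using Psm[OF I_meas[OF that]] B'm unfolding fi_def by simp
  have fi_pow: "epowr (fi i y) (p/q) = indicator B' y * Ps (I i) y" for i y
  proof -
    have "1/p*q*(p/q) = 1" using p0 q0 by simp
    then show ?thesis unfolding fi_def by (simp add: epowr_mult[OF r0] epowr_ind epowr_epowr)
  qed
  have pt2: "indicator B' y * Ps {0..1} y \<le> epowr (ennreal C) p * epowr (\<Sum>i\<in>{1..l}. fi i y) (p/q)" for y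
  proof (cases "y \<in> B'")
    case True
    have "1/q*p = p/q" by simp
    then show ?thesis using pt[of y] True by (simp add: fi_def)
  qed simp
  have summ: "(\<lambda>y. epowr (\<Sum>i\<in>{1..l}. fi i y) (p/q)) \<in> borel_measurable lborel"
    using fim by (intro measurable_epowr borel_measurable_sum) auto
  have "(\<integral>\<^sup>+y. indicator B' y * Ps {0..1} y \<partial>lborel) \<le> (\<integral>\<^sup>+y. epowr (ennreal C) p * epowr (\<Sum>i\<in>{1..l}. fi i y) (p/q) \<partial>lborel)"
    by (intro nn_integral_mono pt2)
  also have "\<dots> = epowr (ennreal C) p * (\<integral>\<^sup>+y. epowr (\<Sum>i\<in>{1..l}. fi i y) (p/q) \<partial>lborel)"
    by (rule nn_integral_cmult[OF summ])
  also have "(\<integral>\<^sup>+y. epowr (\<Sum>i\<in>{1..l}. fi i y) (p/q) \<partial>lborel)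
      \<le> epowr (\<Sum>i\<in>{1..l}. epowr (\<integral>\<^sup>+y. indicator B' y * Ps (I i) y \<partial>lborel) (1/(p/q))) (p/q)"
  proof -
    have "epowr (\<integral>\<^sup>+y. epowr (\<Sum>i\<in>{1..l}. fi i y) (p/q) \<partial>lborel) (1/(p/q))
        \<le> (\<Sum>i\<in>{1..l}. epowr (\<integral>\<^sup>+y. epowr (fi i y) (p/q) \<partial>lborel) (1/(p/q)))"
      by (rule mink_sum[OF r1 _ fim]) auto
    then have "epowr (epowr (\<integral>\<^sup>+y. epowr (\<Sum>i\<in>{1..l}. fi i y) (p/q) \<partial>lborel) (1/(p/q))) (p/q)
        \<le> epowr (\<Sum>i\<in>{1..l}. epowr (\<integral>\<^sup>+y. epowr (fi i y) (p/q) \<partial>lborel) (1/(p/q))) (p/q)"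
      by (rule epowr_mono[OF r0])
    moreover have "1/(p/q)*(p/q) = 1" using p0 q0 by simp
    ultimately show ?thesis by (simp only: epowr_epowr fi_pow epowr_1)
  qed
  finally have main_ineq: "(\<integral>\<^sup>+y. indicator B' y * Ps {0..1} y \<partial>lborel)
      \<le> epowr (ennreal C) p * epowr (\<Sum>i\<in>{1..l}. epowr (\<integral>\<^sup>+y. indicator B' y * Ps (I i) y \<partial>lborel) (1/(p/q))) (p/q)"
    by (simp add: mult_left_mono)
  have "Lpnorm p (boxprod B B') (E2 Q1 Q2 ({0..1} \<times> {0..1}) h)
      = epowr (\<integral>\<^sup>+y. indicator B' y * Ps {0..1} y \<partial>lborel) (1/p)"
    unfolding Ps_def by (rule Lp_box[OF hm Q1_meas Q2_meas sq B_meas B'm])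
  also have "\<dots> \<le> epowr (epowr (ennreal C) p * epowr (\<Sum>i\<in>{1..l}. epowr (\<integral>\<^sup>+y. indicator B' y * Ps (I i) y \<partial>lborel) (1/(p/q))) (p/q)) (1/p)"
    by (rule epowr_mono[OF _ main_ineq]) (use p0 in simp)
  also have "\<dots> = ennreal C * epowr (\<Sum>i\<in>{1..l}. epowr (\<integral>\<^sup>+y. indicator B' y * Ps (I i) y \<partial>lborel) (1/(p/q))) (p/q*(1/p))"
    using p0 by (simp add: epowr_mult epowr_epowr)
  also have "\<dots> = ennreal C * epowr (\<Sum>i\<in>{1..l}.
              epowr (Lpnorm p (boxprod B B') (E2 Q1 Q2 (I i \<times> {0..1}) h)) q) (1 / q)"
  proof -
    have e1: "p/q*(1/p) = 1/q" using p0 q0 by simp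
    have "(\<Sum>i\<in>{1..l}. epowr (\<integral>\<^sup>+y. indicator B' y * Ps (I i) y \<partial>lborel) (1/(p/q)))
        = (\<Sum>i\<in>{1..l}. epowr (Lpnorm p (boxprod B B') (E2 Q1 Q2 (I i \<times> {0..1}) h)) q)"
    proof (intro sum.cong refl)
      fix i assume i: "i \<in> {1..l}"
      have "Lpnorm p (boxprod B B') (E2 Q1 Q2 (I i \<times> {0..1}) h)
          = epowr (\<integral>\<^sup>+y. indicator B' y * Ps (I i) y \<partial>lborel) (1/p)"
        unfolding Ps_def by (rule Lp_box[OF hm Q1_meas Q2_meas I_meas[OF i] B_meas B'm])
      moreover have "1/p*q = 1/(p/q)" by simp
      ultimately show "epowr (\<integral>\<^sup>+y. indicator B' y * Ps (I i) y \<partial>lborel) (1/(p/q))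
          = epowr (Lpnorm p (boxprod B B') (E2 Q1 Q2 (I i \<times> {0..1}) h)) q"
        by (simp add: epowr_epowr)
    qed
    then show ?thesis using e1 by simp
  qed
  finally show ?thesis .
qed


theorem corollary3p3:
  fixes p q C :: real and l :: nat
    and Q1 :: "real \<Rightarrow> real ^ 'd1" and Q2 :: "real \<times> real \<Rightarrow> real ^ 'd2"
    and I :: "nat \<Rightarrow> real set" and B :: "(real \<times> (real ^ 'd1)) set"
  assumes pq: "p \<ge> q" "q \<ge> 1"
    and Q1_meas: "Q1 \<in> borel_measurable borel"
    and Q2_meas: "Q2 \<in> borel_measurable borel"
    and I_meas: "\<And>i. i \<in> {1..l} \<Longrightarrow> I i \<in> sets borel"
    and I_disj: "\<And>i j. i \<in> {1..l} \<Longrightarrow> j \<in> {1..l} \<Longrightarrow> i \<noteq> j \<Longrightarrow> I i \<inter> I j = {}"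
    and I_cover: "(\<Union>i\<in>{1..l}. I i) = {0..1}"
    and B_meas: "B \<in> sets borel"
    and hyp: "\<And>h :: real \<Rightarrow> complex. h \<in> borel_measurable borel \<Longrightarrow>
        Lpnorm p B (E3 Q1 {0..1} h)
          \<le> ennreal C * epowr (\<Sum>i\<in>{1..l}. epowr (Lpnorm p B (E3 Q1 (I i) h)) q) (1 / q)"
  shows "\<And>(B' :: (real \<times> (real ^ 'd2)) set) (h :: real \<times> real \<Rightarrow> complex).
      B' \<in> sets borel \<Longrightarrow> h \<in> borel_measurable borel \<Longrightarrow>
      Lpnorm p (boxprod B B') (E2 Q1 Q2 ({0..1} \<times> {0..1}) h)
        \<le> ennreal C * epowr (\<Sum>i\<in>{1..l}.
              epowr (Lpnorm p (boxprod B B') (E2 Q1 Q2 (I i \<times> {0..1}) h)) q) (1 / q)"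
  by (rule main[OF pq Q1_meas Q2_meas I_meas I_cover B_meas hyp])

end
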